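(* Let $G_1,\ldots,G_d$ be finite simple undirected graphs, $G_i$ being $r_i$-regular with $k_i$ vertices, and set $s_i=k_i-r_i$. Assume $s_1<s_2<\cdots<s_d$. Then \[ E(K_d[G_1,\ldots,G_d])\ge 2\sum_{i=1}^{d-1}s_i+\sum_{i=1}^d E(G_i). \] In particular, if $d\ge 2$, then \[ E(K_d[G_1,\ldots,G_d])> E(K_d)+\sum_{i=1}^d E(G_i). \]
   Context: $K_d$ is the complete graph on $d$ vertices, and $K_d[G_1,\ldots,G_d]$ is the join of $G_1,\ldots,G_d$: the disjoint union of the $G_i$ with an edge added between every vertex of $G_i$ and every vertex of $G_j$ for all $i\ne j$. The energy $E(H)$ of a graph $H$ is the sum of the absolute values of the eigenvalues (with multiplicity) of its adjacency matrix. *)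

theory Defs
  imports "Jordan_Normal_Form.Char_Poly"
begin

definition mat_energy :: "complex mat \<Rightarrow> real" where
  "mat_energy A = (\<Sum>a\<in>{a. poly (char_poly A) a = 0}. real (order a (char_poly A)) * cmod a)"

(* A graph on vertex set {0..<n} given by an adjacency relation R. *)
definition adj_mat :: "nat \<Rightarrow> (nat \<Rightarrow> nat \<Rightarrow> bool) \<Rightarrow> complex mat" where
  "adj_mat n R = mat n n (\<lambda>(p,q). if R p q then 1 else 0)"

definition graph_energy :: "nat \<Rightarrow> (nat \<Rightarrow> nat \<Rightarrow> bool) \<Rightarrow> real" where
  "graph_energy n R = mat_energy (adj_mat n R)"

definition simple_graph :: "nat \<Rightarrow> (nat \<Rightarrow> nat \<Rightarrow> bool) \<Rightarrow> bool" where
  "simple_graph n R \<longleftrightarrow> (\<forall>u<n. \<forall>v<n. R u v = R v u) \<and> (\<forall>u<n. \<not> R u u)"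

definition regular_graph :: "nat \<Rightarrow> (nat \<Rightarrow> nat \<Rightarrow> bool) \<Rightarrow> nat \<Rightarrow> bool" where
  "regular_graph n R r \<longleftrightarrow> (\<forall>u<n. card {v. v < n \<and> R u v} = r)"

definition complete_rel :: "nat \<Rightarrow> nat \<Rightarrow> bool" where
  "complete_rel p q \<longleftrightarrow> p \<noteq> q"

(* offset of block i in the join: vertices of G_i are off k i + u, u < k i *)
definition off :: "(nat \<Rightarrow> nat) \<Rightarrow> nat \<Rightarrow> nat" where
  "off k i = (\<Sum>j<i. k j)"

(* adjacency of the join K_d[G_0,...,G_{d-1}] on vertex set {0..<off k d} *)
definition join_rel :: "nat \<Rightarrow> (nat \<Rightarrow> nat) \<Rightarrow> (nat \<Rightarrow> nat \<Rightarrow> nat \<Rightarrow> bool) \<Rightarrow> nat \<Rightarrow> nat \<Rightarrow> bool" where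
  "join_rel d k E p q \<longleftrightarrow> (\<exists>i<d. \<exists>j<d. \<exists>u<k i. \<exists>v<k j.
      p = off k i + u \<and> q = off k j + v \<and> (if i = j then E i u v else True))"

end

theory Submission
  imports Defs
begin

definition pen :: "complex poly \<Rightarrow> real" where
  "pen p = (\<Sum>a\<in>{a. poly p a = 0}. real (order a p) * cmod a)"

lemma mat_energy_pen: "mat_energy A = pen (char_poly A)"
  unfolding mat_energy_def pen_def by simp

lemma pen_superset:
  assumes "p \<noteq> 0" "finite S" "{a. poly p a = 0} \<subseteq> S"
  shows "pen p = (\<Sum>a\<in>S. real (order a p) * cmod a)"
  unfolding pen_def
  by (rule sum.mono_neutral_left[OF assms(2,3)]) (auto simp: order_root)

lemma pen_mult:
  assumes "p \<noteq> 0" "q \<noteq> 0"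
  shows "pen (p * q) = pen p + pen q"
proof -
  let ?S = "{a. poly p a = 0} \<union> {a. poly q a = 0}"
  have fin: "finite ?S" using assms poly_roots_finite by auto
  have "pen (p*q) = (\<Sum>a\<in>?S. real (order a (p*q)) * cmod a)"
    by (rule pen_superset) (use assms fin in auto)
  also have "\<dots> = (\<Sum>a\<in>?S. real (order a p) * cmod a + real (order a q) * cmod a)"
    by (rule sum.cong) (use assms in \<open>auto simp: order_mult algebra_simps\<close>)
  also have "\<dots> = pen p + pen q"
    by (simp add: sum.distrib pen_superset[OF assms(1) fin] pen_superset[OF assms(2) fin])
  finally show ?thesis .
qed

lemma pen_nonneg: "pen p \<ge> 0"
  unfolding pen_def by (intro sum_nonneg) auto

lemma pen_one[simp]: "pen 1 = 0"
  unfolding pen_def by simp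

lemma pen_linear: "pen [:-c, 1:] = cmod c"
proof -
  have "pen [:-c,1:] = (\<Sum>a\<in>{c}. real (order a [:-c,1:]) * cmod a)"
    by (rule pen_superset) auto
  also have "\<dots> = cmod c" using order_power_n_n[of c 1] by simp
  finally show ?thesis .
qed

lemma pen_prod_list:
  assumes "\<forall>p\<in>set ps. p \<noteq> 0"
  shows "pen (prod_list ps) = (\<Sum>p\<leftarrow>ps. pen p)"
  using assms
proof (induction ps)
  case Nil then show ?case by simp
next
  case (Cons p ps)
  have "prod_list ps \<noteq> 0" using Cons.prems by (auto simp: prod_list_zero_iff)
  then show ?case using Cons by (simp add: pen_mult)
qed

lemma pen_prod:
  fixes d :: nat
  assumes "\<forall>i<d. p i \<noteq> 0"
  shows "pen (\<Prod>i<d. p i) = (\<Sum>i<d. pen (p i))"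
  using assms
proof (induction d)
  case 0 then show ?case by simp
next
  case (Suc d)
  have "(\<Prod>i<d. p i) \<noteq> 0" using Suc.prems by auto
  then show ?case using Suc by (simp add: pen_mult)
qed

lemma pen_power_linear: "pen ([:-c, 1:] ^ m) = real m * cmod c"
proof (induction m)
  case 0 then show ?case by simp
next
  case (Suc m)
  have "[:-c,1:] ^ m \<noteq> 0" by simp
  have e: "[:-c,1:]^Suc m = [:-c,1:] * [:-c,1:]^m" by simp
  show ?case unfolding e using Suc by (subst pen_mult) (auto simp: pen_linear algebra_simps)
qed

lemma pen_ge:
  assumes "p \<noteq> 0" "finite F" "\<And>a. a \<in> F \<Longrightarrow> poly p a = 0"
  shows "pen p \<ge> (\<Sum>a\<in>F. cmod a)"
proof -
  have fin: "finite {a. poly p a = 0}" using assms poly_roots_finite by auto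
  have "(\<Sum>a\<in>F. cmod a) \<le> (\<Sum>a\<in>F. real (order a p) * cmod a)"
  proof (rule sum_mono)
    fix a assume "a \<in> F"
    then have "order a p \<ge> 1" using assms order_root[of p a] by auto
    then show "cmod a \<le> real (order a p) * cmod a"
      using mult_right_mono[of 1 "real (order a p)" "cmod a"] by simp
  qed
  also have "\<dots> \<le> (\<Sum>a\<in>{a. poly p a = 0}. real (order a p) * cmod a)"
    by (rule sum_mono2[OF fin]) (use assms in auto)
  finally show ?thesis unfolding pen_def .
qed

lemma char_poly_nz: "A \<in> carrier_mat n n \<Longrightarrow> char_poly A \<noteq> 0"
  using degree_monic_char_poly[of A n] by auto

definition blk :: "(nat \<Rightarrow> nat) \<Rightarrow> nat \<Rightarrow> nat" where
  "blk k p = (THE i. off k i \<le> p \<and> p < off k (Suc i))"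

lemma off_0[simp]: "off k 0 = 0" by (simp add: off_def)
lemma off_Suc: "off k (Suc i) = off k i + k i" by (simp add: off_def)

lemma off_mono: "i \<le> j \<Longrightarrow> off k i \<le> off k j"
  unfolding off_def by (rule sum_mono2) auto

lemma off_le: "i < j \<Longrightarrow> off k (Suc i) \<le> off k j"
  using off_mono[of "Suc i" j k] by simp

lemma blk_unique: assumes "off k i \<le> p" "p < off k (Suc i)" shows "blk k p = i"
  unfolding blk_def
proof (rule the_equality)
  show "off k i \<le> p \<and> p < off k (Suc i)" using assms by simp
next
  fix j assume j: "off k j \<le> p \<and> p < off k (Suc j)"
  show "j = i"
  proof (rule ccontr)
    assume "j \<noteq> i"
    then have "j < i \<or> i < j" by auto
    then show False
    proof
      assume "j < i" then have "off k (Suc j) \<le> off k i" by (rule off_le)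
      then show False using j assms by simp
    next
      assume "i < j" then have "off k (Suc i) \<le> off k j" by (rule off_le)
      then show False using j assms by simp
    qed
  qed
qed

lemma blk_off: "u < k i \<Longrightarrow> blk k (off k i + u) = i"
  by (rule blk_unique) (auto simp: off_Suc)

lemma blk_ex: "p < off k d \<Longrightarrow> blk k p < d \<and> off k (blk k p) \<le> p \<and> p < off k (Suc (blk k p))"
proof (induction d)
  case 0 then show ?case by simp
next
  case (Suc d)
  show ?case
  proof (cases "p < off k d")
    case True then show ?thesis using Suc by auto
  next
    case False
    then have "blk k p = d" using Suc.prems by (intro blk_unique) auto
    then show ?thesis using Suc.prems False by auto
  qed
qed

lemma join_rel_char:
  assumes "p < off k d" "q < off k d"
  shows "join_rel d k E p q \<longleftrightarrow>
    (if blk k p = blk k q then E (blk k p) (p - off k (blk k p)) (q - off k (blk k q)) else True)"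
proof
  assume "join_rel d k E p q"
  then obtain i j u v where "i<d" "j<d" "u<k i" "v < k j" "p = off k i + u" "q = off k j + v"
    "(if i = j then E i u v else True)" unfolding join_rel_def by blast
  then show "(if blk k p = blk k q then E (blk k p) (p - off k (blk k p)) (q - off k (blk k q)) else True)"
    by (auto simp: blk_off)
next
  assume h: "(if blk k p = blk k q then E (blk k p) (p - off k (blk k p)) (q - off k (blk k q)) else True)"
  from blk_ex[OF assms(1)] blk_ex[OF assms(2)]
  have "blk k p < d \<and> blk k q < d \<and> p - off k (blk k p) < k (blk k p) \<and> q - off k (blk k q) < k (blk k q)
    \<and> p = off k (blk k p) + (p - off k (blk k p)) \<and> q = off k (blk k q) + (q - off k (blk k q))
    \<and> (if blk k p = blk k q then E (blk k p) (p - off k (blk k p)) (q - off k (blk k q)) else True)"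
    using h by (auto simp: off_Suc)
  then show "join_rel d k E p q" unfolding join_rel_def by blast
qed

lemma sum_block:
  fixes h :: "nat \<Rightarrow> 'a::comm_monoid_add"
  assumes "c < d"
  shows "(\<Sum>p\<in>{0..<off k d}. if blk k p = c then h p else 0) = (\<Sum>u<k c. h (off k c + u))"
proof -
  have sub: "{off k c..<off k (Suc c)} \<subseteq> {0..<off k d}" using off_le[of c d k] assms by auto
  have "(\<Sum>p\<in>{0..<off k d}. if blk k p = c then h p else 0) = (\<Sum>p\<in>{off k c..<off k (Suc c)}. if blk k p = c then h p else 0)"
  proof (rule sum.mono_neutral_right)
    show "\<forall>i\<in>{0..<off k d} - {off k c..<off k (Suc c)}. (if blk k i = c then h i else 0) = 0"
    proof
      fix i assume i: "i \<in> {0..<off k d} - {off k c..<off k (Suc c)}"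
      then have "blk k i \<noteq> c" using blk_ex[of i k d] by auto
      then show "(if blk k i = c then h i else 0) = 0" by simp
    qed
  qed (use sub in auto)
  also have "\<dots> = (\<Sum>p\<in>{off k c..<off k (Suc c)}. h p)"
    by (rule sum.cong) (auto simp: blk_unique)
  also have "\<dots> = (\<Sum>u\<in>{0..<k c}. h (u + off k c))"
    using sum.shift_bounds_nat_ivl[of h 0 "off k c" "k c"] by (simp add: off_Suc add.commute)
  finally show ?thesis by (simp add: lessThan_atLeast0 add.commute)
qed

lemma char_poly_four_block_ll0:
  fixes A1 :: "'a :: idom mat"
  assumes A1: "A1 \<in> carrier_mat n n" and A2: "A2 \<in> carrier_mat n m" and A4: "A4 \<in> carrier_mat m m"
  shows "char_poly (four_block_mat A1 A2 (0\<^sub>m m n) A4) = char_poly A1 * char_poly A4"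
proof -
  let ?cm = "\<lambda> A. [:0, 1:] \<cdot>\<^sub>m 1\<^sub>m (dim_row A) + map_mat (\<lambda>a. [:- a:]) A"
  let ?B2 = "map_mat (\<lambda>a. [:- a:]) A2"
  have "char_poly (four_block_mat A1 A2 (0\<^sub>m m n) A4) = det (?cm (four_block_mat A1 A2 (0\<^sub>m m n) A4))"
    unfolding char_poly_defs by simp
  also have "?cm (four_block_mat A1 A2 (0\<^sub>m m n) A4) = four_block_mat (?cm A1) ?B2 (0\<^sub>m m n) (?cm A4)"
    by (rule eq_matI, insert A1 A2 A4, auto simp: one_poly_def)
  also have "det \<dots> = det (?cm A1) * det (?cm A4)"
    by (rule det_four_block_mat_lower_left_zero[of _ n _ m], insert A1 A2 A4, auto)
  also have "\<dots> = char_poly A1 * char_poly A4" unfolding char_poly_defs ..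
  finally show ?thesis .
qed

lemma sum_delta_mult:
  fixes f :: "nat \<Rightarrow> 'a::comm_ring_1"
  assumes "a < n"
  shows "(\<Sum>i\<in>{0..<n}. (if i = a then 1 else 0) * f i) = f a"
proof -
  have "(\<Sum>i\<in>{0..<n}. (if i = a then 1 else 0) * f i) = (\<Sum>i\<in>{0..<n}. if i = a then f i else 0)"
    by (rule sum.cong) auto
  also have "\<dots> = f a" using assms by (simp add: sum.delta)
  finally show ?thesis .
qed

lemma sum_indicator_card:
  fixes m :: nat
  shows   "(\<Sum>u<m. if P u then (1::complex) else 0) = of_nat (card {u. u < m \<and> P u})"
proof -
  have "(\<Sum>u<m. if P u then (1::complex) else 0) = of_nat (card ({..<m} \<inter> Collect P))"
    by (subst sum.If_cases) auto
  also have "{..<m} \<inter> Collect P = {u. u < m \<and> P u}" by auto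
  finally show ?thesis by simp
qed

locale js =
  fixes d :: nat and k r :: "nat \<Rightarrow> nat" and E :: "nat \<Rightarrow> nat \<Rightarrow> nat \<Rightarrow> bool"
  assumes kpos: "\<forall>i<d. k i > 0" and reg: "\<forall>i<d. regular_graph (k i) (E i) (r i)"
begin

definition "n = off k d"
definition "NS = {0..<n} - off k ` {..<d}"
definition "sg c = sorted_list_of_set NS ! (c - d)"
definition "djr p q = (blk k p = blk k q \<and> E (blk k p) (p - off k (blk k p)) (q - off k (blk k q)))"
definition "Dm = adj_mat n djr"
definition "Am = adj_mat n (join_rel d k E)"
definition Pm :: "complex mat" where
  "Pm = mat n n (\<lambda>(p,c). if c < d then (if blk k p = c then 1 else 0) else (if p = sg c then 1 else 0))"
definition Pinv :: "complex mat" where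
  "Pinv = mat n n (\<lambda>(c,p). if c < d then (if p = off k c then 1 else 0)
      else (if p = sg c then 1 else 0) - (if p = off k (blk k (sg c)) then 1 else 0))"
definition "Cm = mat (n-d) (n-d) (\<lambda>(i,j). Dm $$ (sg (i+d), sg (j+d)) - Dm $$ (off k (blk k (sg (i+d))), sg (j+d)))"
definition Qm :: "complex mat" where "Qm = mat d d (\<lambda>(i,j). if i = j then of_nat (r j) else of_nat (k j))"
definition Rm :: "complex mat" where "Rm = mat d d (\<lambda>(i,j). if i = j then of_nat (r j) else 0)"

lemma off_lt: "i < d \<Longrightarrow> off k i < n"
  using off_le[of i d k] kpos unfolding n_def by (auto simp: off_Suc)

lemma blk_off0: "i < d \<Longrightarrow> blk k (off k i) = i"
  using blk_off[of 0 k i] kpos by auto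

lemma blk_n: "p < n \<Longrightarrow> blk k p < d \<and> off k (blk k p) \<le> p \<and> p < off k (blk k p) + k (blk k p)"
  using blk_ex[of p k d] unfolding n_def by (auto simp: off_Suc)

lemma card_starts: "card (off k ` {..<d}) = d"
proof -
  have "inj_on (off k) {..<d}" by (rule inj_onI) (metis blk_off0 lessThan_iff)
  then show ?thesis by (simp add: card_image)
qed

lemma starts_sub: "off k ` {..<d} \<subseteq> {0..<n}" using off_lt by auto

lemma d_le_n: "d \<le> n"
  using card_mono[OF _ starts_sub] card_starts by auto

lemma card_NS: "card NS = n - d"
  unfolding NS_def by (simp add: card_Diff_subset[OF _ starts_sub] card_starts finite_subset[OF starts_sub])

lemma finite_NS: "finite NS" unfolding NS_def by simp

lemma sg_NS: assumes "d \<le> c" "c < n" shows "sg c \<in> NS"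
proof -
  have "c - d < length (sorted_list_of_set NS)" using assms card_NS finite_NS by simp
  then show ?thesis unfolding sg_def using finite_NS by (metis nth_mem set_sorted_list_of_set)
qed

lemma sg_lt: "d \<le> c \<Longrightarrow> c < n \<Longrightarrow> sg c < n"
  using sg_NS unfolding NS_def by auto

lemma sg_not_start: "d \<le> c \<Longrightarrow> c < n \<Longrightarrow> i < d \<Longrightarrow> sg c \<noteq> off k i"
  using sg_NS unfolding NS_def by auto

lemma sg_inj: assumes "d \<le> c" "c < n" "d \<le> c'" "c' < n" "sg c = sg c'" shows "c = c'"
proof -
  have "distinct (sorted_list_of_set NS)" by simp
  moreover have "c - d < length (sorted_list_of_set NS)" "c' - d < length (sorted_list_of_set NS)"
    using assms card_NS finite_NS by auto
  ultimately have "c - d = c' - d" using assms(5) unfolding sg_def by (simp add: nth_eq_iff_index_eq)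
  then show ?thesis using assms by simp
qed

lemma Pm_carrier[simp]: "Pm \<in> carrier_mat n n" by (simp add: Pm_def)
lemma Pinv_carrier[simp]: "Pinv \<in> carrier_mat n n" by (simp add: Pinv_def)
lemma Dm_carrier[simp]: "Dm \<in> carrier_mat n n" by (simp add: Dm_def adj_mat_def)
lemma Am_carrier[simp]: "Am \<in> carrier_mat n n" by (simp add: Am_def adj_mat_def)

lemma Pi_vec:
  assumes v: "v \<in> carrier_vec n" and c: "c < n"
  shows "(Pinv *\<^sub>v v) $ c = (if c < d then v $ (off k c) else v $ (sg c) - v $ (off k (blk k (sg c))))"
proof -
  have "(Pinv *\<^sub>v v) $ c = (\<Sum>p\<in>{0..<n}. Pinv $$ (c,p) * v $ p)"
    using v c by (simp add: scalar_prod_def Pinv_def)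
  also have "\<dots> = (if c < d then v $ (off k c) else v $ (sg c) - v $ (off k (blk k (sg c))))"
  proof (cases "c < d")
    case True
    have "(\<Sum>p\<in>{0..<n}. Pinv $$ (c,p) * v $ p) = (\<Sum>p\<in>{0..<n}. (if p = off k c then 1 else 0) * v $ p)"
      by (rule sum.cong) (use True c in \<open>auto simp: Pinv_def\<close>)
    also have "\<dots> = v $ (off k c)" by (rule sum_delta_mult) (use off_lt True in auto)
    finally show ?thesis using True by simp
  next
    case False
    have b: "off k (blk k (sg c)) < n" using blk_n[OF sg_lt] off_lt False c by auto
    have "(\<Sum>p\<in>{0..<n}. Pinv $$ (c,p) * v $ p) = (\<Sum>p\<in>{0..<n}. (if p = sg c then 1 else 0) * v $ p
        - (if p = off k (blk k (sg c)) then 1 else 0) * v $ p)"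
      by (rule sum.cong) (use False c in \<open>auto simp: Pinv_def algebra_simps\<close>)
    also have "\<dots> = v $ (sg c) - v $ (off k (blk k (sg c)))"
    proof -
      have "d \<le> c" using False by simp
      note s1 = sum_delta_mult[OF sg_lt[OF this c], of "\<lambda>p. v $ p"]
      show ?thesis
      unfolding sum_subtractf using s1 sum_delta_mult[OF b, of "\<lambda>p. v $ p"] by simp
    qed
    finally show ?thesis using False by simp
  qed
  finally show ?thesis .
qed

lemma Pinv_mult_entry:
  assumes M: "M \<in> carrier_mat n n" and c: "c' < n" "c < n"
  shows "(Pinv * M) $$ (c', c) = (if c' < d then M $$ (off k c', c) else M $$ (sg c', c) - M $$ (off k (blk k (sg c')), c))"
proof -
  have dims: "dim_row Pinv = n" "dim_col Pinv = n" "dim_col M = n" "dim_row M = n" using M by (auto simp: Pinv_def)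
  have "(Pinv * M) $$ (c', c) = (Pinv *\<^sub>v col M c) $ c'"
    using c by (simp add: dims)
  also have "\<dots> = (if c' < d then col M c $ (off k c') else col M c $ (sg c') - col M c $ (off k (blk k (sg c'))))"
    by (rule Pi_vec) (use M c in auto)
  also have "\<dots> = (if c' < d then M $$ (off k c', c) else M $$ (sg c', c) - M $$ (off k (blk k (sg c')), c))"
    using M c off_lt sg_lt blk_n[OF sg_lt] by (auto simp: off_lt)
  finally show ?thesis .
qed

lemma PiP: "Pinv * Pm = 1\<^sub>m n"
proof (rule eq_matI)
  fix c' c assume c: "c' < dim_row (1\<^sub>m n)" "c < dim_col (1\<^sub>m n)"
  then have c': "c' < n" "c < n" by auto
  have P1: "Pm $$ (p, c) = (if c < d then (if blk k p = c then 1 else 0) else (if p = sg c then 1 else 0))"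
    if "p < n" for p using that c' by (simp add: Pm_def)
  show "(Pinv * Pm) $$ (c', c) = 1\<^sub>m n $$ (c', c)"
    unfolding Pinv_mult_entry[OF Pm_carrier c']
  proof (cases "c' < d")
    case True
    have o: "off k c' < n" using off_lt[OF True] .
    show "(if c' < d then Pm $$ (off k c', c) else Pm $$ (sg c', c) - Pm $$ (off k (blk k (sg c')), c)) = 1\<^sub>m n $$ (c', c)"
    proof (cases "c < d")
      case True2: True
      then show ?thesis using True c' P1[OF o] blk_off0[OF True] by auto
    next
      case False
      then show ?thesis using True c' P1[OF o] sg_not_start[of c c'] by auto
    qed
  next
    case False
    have b: "off k (blk k (sg c')) < n" "blk k (sg c') < d" using blk_n[OF sg_lt] off_lt False c' by auto
    have sl: "sg c' < n" using sg_lt False c' by auto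
    show "(if c' < d then Pm $$ (off k c', c) else Pm $$ (sg c', c) - Pm $$ (off k (blk k (sg c')), c)) = 1\<^sub>m n $$ (c', c)"
    proof (cases "c < d")
      case True
      then show ?thesis using False c' P1[OF sl] P1[OF b(1)] blk_off0[OF b(2)] by auto
    next
      case False2: False
      then show ?thesis using False c' P1[OF sl] P1[OF b(1)] sg_not_start[of c "blk k (sg c')"] sg_inj[of c' c] b
        by auto
    qed
  qed
qed (auto simp: Pinv_def Pm_def)

lemma PPi: "Pm * Pinv = 1\<^sub>m n"
  by (rule mat_mult_left_right_inverse[OF Pinv_carrier Pm_carrier PiP])

end

context js begin

lemma dims[simp]: "dim_row Pinv = n" "dim_col Pinv = n" "dim_row Pm = n" "dim_col Pm = n"
  "dim_row Dm = n" "dim_col Dm = n" "dim_row Am = n" "dim_col Am = n"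
  by (auto simp: Pinv_def Pm_def Dm_def Am_def adj_mat_def)

lemma Dm_entry: "p < n \<Longrightarrow> q < n \<Longrightarrow> Dm $$ (p,q) = (if djr p q then 1 else 0)"
  by (simp add: Dm_def adj_mat_def)

lemma Am_entry: "p < n \<Longrightarrow> q < n \<Longrightarrow> Am $$ (p,q) = (if join_rel d k E p q then 1 else 0)"
  by (simp add: Am_def adj_mat_def)

lemma Am_Dm: assumes "p < n" "q < n"
  shows "Am $$ (p,q) = (if blk k p = blk k q then Dm $$ (p,q) else 1)"
  using assms join_rel_char[of p k d q E] unfolding Am_entry[OF assms] Dm_entry[OF assms] djr_def n_def
  by auto

lemma blockpt_lt: "c < d \<Longrightarrow> u < k c \<Longrightarrow> off k c + u < n"
  using off_le[of c d k] unfolding n_def by (auto simp: off_Suc)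

lemma mult_Pm_entry:
  assumes M: "M \<in> carrier_mat n n" and qc: "q < n" "c < n"
  shows "(M * Pm) $$ (q,c) = (if c < d then (\<Sum>u<k c. M $$ (q, off k c + u)) else M $$ (q, sg c))"
proof -
  have "(M * Pm) $$ (q,c) = (\<Sum>p\<in>{0..<n}. M $$ (q,p) * Pm $$ (p,c))"
    using M qc by (simp add: scalar_prod_def Pm_def)
  also have "\<dots> = (if c < d then (\<Sum>u<k c. M $$ (q, off k c + u)) else M $$ (q, sg c))"
  proof (cases "c < d")
    case True
    have "(\<Sum>p\<in>{0..<n}. M $$ (q,p) * Pm $$ (p,c)) = (\<Sum>p\<in>{0..<off k d}. if blk k p = c then M $$ (q,p) else 0)"
      by (rule sum.cong) (use True qc in \<open>auto simp: Pm_def n_def\<close>)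
    also have "\<dots> = (\<Sum>u<k c. M $$ (q, off k c + u))" by (rule sum_block[OF True])
    finally show ?thesis using True by simp
  next
    case False
    have "(\<Sum>p\<in>{0..<n}. M $$ (q,p) * Pm $$ (p,c)) = (\<Sum>p\<in>{0..<n}. (if p = sg c then 1 else 0) * M $$ (q,p))"
      by (rule sum.cong) (use False qc in \<open>auto simp: Pm_def\<close>)
    also have "\<dots> = M $$ (q, sg c)" by (rule sum_delta_mult) (use sg_lt False qc in auto)
    finally show ?thesis using False by simp
  qed
  finally show ?thesis .
qed

lemma DP_entry:
  assumes qc: "q < n" "c < n"
  shows "(Dm * Pm) $$ (q,c) = (if c < d then (if blk k q = c then of_nat (r c) else 0) else Dm $$ (q, sg c))"
proof (cases "c < d")
  case True
  have "(\<Sum>u<k c. Dm $$ (q, off k c + u)) = (\<Sum>u<k c. if blk k q = c \<and> E c (q - off k c) u then 1 else 0)"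
    by (rule sum.cong) (use True qc blockpt_lt in \<open>auto simp: Dm_entry djr_def blk_off\<close>)
  also have "\<dots> = (if blk k q = c then of_nat (r c) else 0)"
  proof (cases "blk k q = c")
    case True2: True
    have "q - off k c < k c" using blk_n[OF qc(1)] True2 by auto
    then have "card {u. u < k c \<and> E c (q - off k c) u} = r c"
      using reg True unfolding regular_graph_def by auto
    then show ?thesis using True2 sum_indicator_card[where m="k c" and P="E c (q - off k c)"] by simp
  qed simp
  finally show ?thesis using mult_Pm_entry[OF Dm_carrier qc] True by simp
next
  case False
  then show ?thesis using mult_Pm_entry[OF Dm_carrier qc] by simp
qed

lemma AP_entry:
  assumes qc: "q < n" "c < n"
  shows "(Am * Pm) $$ (q,c) = (if c < d then (if blk k q = c then of_nat (r c) else of_nat (k c)) else Am $$ (q, sg c))"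
proof (cases "c < d")
  case True
  have "(\<Sum>u<k c. Am $$ (q, off k c + u)) = (\<Sum>u<k c. if blk k q = c then Dm $$ (q, off k c + u) else 1)"
    by (rule sum.cong) (use True qc blockpt_lt in \<open>auto simp: Am_Dm blk_off\<close>)
  also have "\<dots> = (if blk k q = c then (Dm * Pm) $$ (q,c) else of_nat (k c))"
    using mult_Pm_entry[OF Dm_carrier qc] True by simp
  also have "\<dots> = (if blk k q = c then of_nat (r c) else of_nat (k c))"
    using DP_entry[OF qc] True by simp
  finally show ?thesis using mult_Pm_entry[OF Am_carrier qc] True by simp
next
  case False
  then show ?thesis using mult_Pm_entry[OF Am_carrier qc] by simp
qed

lemma conj_back: assumes M: "M \<in> carrier_mat n n"
  shows "Pm * (Pinv * M * Pm) * Pinv = M"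
proof -
  have MP: "M * Pm \<in> carrier_mat n n" using M by auto
  have "Pinv * M * Pm = Pinv * (M * Pm)" by (rule assoc_mult_mat[OF Pinv_carrier M Pm_carrier])
  moreover have "Pm * (Pinv * (M * Pm)) = (Pm * Pinv) * (M * Pm)" by (rule assoc_mult_mat[OF Pm_carrier Pinv_carrier MP, symmetric])
  moreover have "(M * Pm) * Pinv = M * (Pm * Pinv)" by (rule assoc_mult_mat[OF M Pm_carrier Pinv_carrier])
  ultimately show ?thesis using M by (simp add: PPi)
qed

lemma cp_conj: assumes M: "M \<in> carrier_mat n n"
  shows "char_poly M = char_poly (Pinv * M * Pm)"
proof (rule char_poly_similar)
  have B: "Pinv * M * Pm \<in> carrier_mat n n" using M by (metis mult_carrier_mat Pinv_carrier Pm_carrier)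
  have dM: "dim_row M = n" using M by auto
  have "similar_mat_wit M (Pinv * M * Pm) Pm Pinv"
    unfolding similar_mat_wit_def Let_def dM
    using M B PiP PPi conj_back[OF M, symmetric] Pm_carrier Pinv_carrier by blast
  then show "similar_mat M (Pinv * M * Pm)"
    unfolding similar_mat_def by blast
qed

definition "XD = mat d (n-d) (\<lambda>(i,j). (Pinv * Dm * Pm) $$ (i, j + d))"
definition "XA = mat d (n-d) (\<lambda>(i,j). (Pinv * Am * Pm) $$ (i, j + d))"

lemma dims2[simp]: "dim_row Qm = d" "dim_col Qm = d" "dim_row Rm = d" "dim_col Rm = d"
  "dim_row Cm = n - d" "dim_col Cm = n - d" "dim_row XD = d" "dim_col XD = n - d" "dim_row XA = d" "dim_col XA = n - d"
  by (auto simp: Qm_def Rm_def Cm_def XD_def XA_def)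

lemma BD_entry: assumes "i < n" "j < n"
  shows "(Pinv * Dm * Pm) $$ (i,j) = (if i < d then (Dm * Pm) $$ (off k i, j)
     else (Dm * Pm) $$ (sg i, j) - (Dm * Pm) $$ (off k (blk k (sg i)), j))"
proof -
  have eq: "Pinv * Dm * Pm = Pinv * (Dm * Pm)" by (rule assoc_mult_mat[OF Pinv_carrier Dm_carrier Pm_carrier])
  have c: "Dm * Pm \<in> carrier_mat n n" by auto
  show ?thesis unfolding eq by (rule Pinv_mult_entry[OF c assms])
qed

lemma BA_entry: assumes "i < n" "j < n"
  shows "(Pinv * Am * Pm) $$ (i,j) = (if i < d then (Am * Pm) $$ (off k i, j)
     else (Am * Pm) $$ (sg i, j) - (Am * Pm) $$ (off k (blk k (sg i)), j))"
proof -
  have eq: "Pinv * Am * Pm = Pinv * (Am * Pm)" by (rule assoc_mult_mat[OF Pinv_carrier Am_carrier Pm_carrier])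
  have c: "Am * Pm \<in> carrier_mat n n" by auto
  show ?thesis unfolding eq by (rule Pinv_mult_entry[OF c assms])
qed

lemma fb_entry:
  assumes "i < n" "j < n" and A1: "A1 \<in> carrier_mat d d" and A2: "A2 \<in> carrier_mat d (n-d)"
    and A4: "A4 \<in> carrier_mat (n-d) (n-d)"
  shows "four_block_mat A1 A2 (0\<^sub>m (n-d) d) A4 $$ (i,j) =
    (if i < d then if j < d then A1 $$ (i,j) else A2 $$ (i, j - d)
     else if j < d then 0 else A4 $$ (i - d, j - d))"
  using assms d_le_n by auto

lemma nn: "d + (n - d) = n" using d_le_n by simp

lemma BD_block: "Pinv * Dm * Pm = four_block_mat Rm XD (0\<^sub>m (n-d) d) Cm"
proof (rule eq_matI)
  fix i j assume ij: "i < dim_row (four_block_mat Rm XD (0\<^sub>m (n-d) d) Cm)" "j < dim_col (four_block_mat Rm XD (0\<^sub>m (n-d) d) Cm)"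
  then have ij': "i < n" "j < n" using d_le_n by auto
  note fb = fb_entry[OF ij', of Rm XD Cm]
  have car: "Rm \<in> carrier_mat d d" "XD \<in> carrier_mat d (n-d)" "Cm \<in> carrier_mat (n-d) (n-d)" by auto
  note fb = fb[OF car]
  show "(Pinv * Dm * Pm) $$ (i,j) = four_block_mat Rm XD (0\<^sub>m (n-d) d) Cm $$ (i,j)"
  proof (cases "i < d")
    case True
    have o: "off k i < n" using off_lt[OF True] .
    show ?thesis
    proof (cases "j < d")
      case True2: True
      have "(Pinv * Dm * Pm) $$ (i,j) = (Dm * Pm) $$ (off k i, j)" using BD_entry[OF ij'] True by simp
      also have "\<dots> = (if i = j then of_nat (r j) else 0)"
        using DP_entry[OF o ij'(2)] True2 blk_off0[OF True] by simp
      also have "\<dots> = Rm $$ (i,j)" using True True2 by (simp add: Rm_def)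
      finally show ?thesis using fb True True2 by simp
    next
      case False
      have "XD $$ (i, j - d) = (Pinv * Dm * Pm) $$ (i, j)" using True False ij' by (simp add: XD_def)
      then show ?thesis using fb True False by simp
    qed
  next
    case False
    have b: "off k (blk k (sg i)) < n" "blk k (sg i) < d" using blk_n[OF sg_lt] off_lt False ij' by auto
    have sl: "sg i < n" using sg_lt False ij' by auto
    have e: "(Pinv * Dm * Pm) $$ (i,j) = (Dm * Pm) $$ (sg i, j) - (Dm * Pm) $$ (off k (blk k (sg i)), j)"
      using BD_entry[OF ij'] False by simp
    show ?thesis
    proof (cases "j < d")
      case True
      have "(Dm * Pm) $$ (sg i, j) = (Dm * Pm) $$ (off k (blk k (sg i)), j)"
        using DP_entry[OF sl ij'(2)] DP_entry[OF b(1) ij'(2)] blk_off0[OF b(2)] True by simp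
      then show ?thesis using e fb False True by simp
    next
      case False2: False
      have "(Dm * Pm) $$ (sg i, j) - (Dm * Pm) $$ (off k (blk k (sg i)), j) = Cm $$ (i - d, j - d)"
        using DP_entry[OF sl ij'(2)] DP_entry[OF b(1) ij'(2)] False2 False ij' by (simp add: Cm_def)
      then show ?thesis using e fb False False2 by simp
    qed
  qed
qed (simp_all add: nn)

lemma BA_block: "Pinv * Am * Pm = four_block_mat Qm XA (0\<^sub>m (n-d) d) Cm"
proof (rule eq_matI)
  fix i j assume ij: "i < dim_row (four_block_mat Qm XA (0\<^sub>m (n-d) d) Cm)" "j < dim_col (four_block_mat Qm XA (0\<^sub>m (n-d) d) Cm)"
  then have ij': "i < n" "j < n" using d_le_n by auto
  note fb = fb_entry[OF ij', of Qm XA Cm]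
  have car: "Qm \<in> carrier_mat d d" "XA \<in> carrier_mat d (n-d)" "Cm \<in> carrier_mat (n-d) (n-d)" by auto
  note fb = fb[OF car]
  show "(Pinv * Am * Pm) $$ (i,j) = four_block_mat Qm XA (0\<^sub>m (n-d) d) Cm $$ (i,j)"
  proof (cases "i < d")
    case True
    have o: "off k i < n" using off_lt[OF True] .
    show ?thesis
    proof (cases "j < d")
      case True2: True
      have "(Pinv * Am * Pm) $$ (i,j) = (Am * Pm) $$ (off k i, j)" using BA_entry[OF ij'] True by simp
      also have "\<dots> = (if i = j then of_nat (r j) else of_nat (k j))"
        using AP_entry[OF o ij'(2)] True2 blk_off0[OF True] by simp
      also have "\<dots> = Qm $$ (i,j)" using True True2 by (simp add: Qm_def)
      finally show ?thesis using fb True True2 by simp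
    next
      case False
      have "XA $$ (i, j - d) = (Pinv * Am * Pm) $$ (i, j)" using True False ij' by (simp add: XA_def)
      then show ?thesis using fb True False by simp
    qed
  next
    case False
    have b: "off k (blk k (sg i)) < n" "blk k (sg i) < d" using blk_n[OF sg_lt] off_lt False ij' by auto
    have sl: "sg i < n" using sg_lt False ij' by auto
    have e: "(Pinv * Am * Pm) $$ (i,j) = (Am * Pm) $$ (sg i, j) - (Am * Pm) $$ (off k (blk k (sg i)), j)"
      using BA_entry[OF ij'] False by simp
    show ?thesis
    proof (cases "j < d")
      case True
      have "(Am * Pm) $$ (sg i, j) = (Am * Pm) $$ (off k (blk k (sg i)), j)"
        using AP_entry[OF sl ij'(2)] AP_entry[OF b(1) ij'(2)] blk_off0[OF b(2)] True by simp
      then show ?thesis using e fb False True by simp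
    next
      case False2: False
      have sj: "sg j < n" using sg_lt False2 ij' by auto
      have e1: "Am $$ (sg i, sg j) = (if blk k (sg i) = blk k (sg j) then Dm $$ (sg i, sg j) else 1)"
        by (rule Am_Dm[OF sl sj])
      have e2: "Am $$ (off k (blk k (sg i)), sg j) = (if blk k (sg i) = blk k (sg j) then Dm $$ (off k (blk k (sg i)), sg j) else 1)"
        using Am_Dm[OF b(1) sj] blk_off0[OF b(2)] by simp
      have e3: "blk k (sg i) \<noteq> blk k (sg j) \<Longrightarrow> Dm $$ (sg i, sg j) = 0 \<and> Dm $$ (off k (blk k (sg i)), sg j) = 0"
        using Dm_entry[OF sl sj] Dm_entry[OF b(1) sj] blk_off0[OF b(2)] by (auto simp: djr_def)
      have "(Am * Pm) $$ (sg i, j) - (Am * Pm) $$ (off k (blk k (sg i)), j) = Am $$ (sg i, sg j) - Am $$ (off k (blk k (sg i)), sg j)"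
        using AP_entry[OF sl ij'(2)] AP_entry[OF b(1) ij'(2)] False2 by simp
      also have "\<dots> = Dm $$ (sg i, sg j) - Dm $$ (off k (blk k (sg i)), sg j)"
        using e1 e2 e3 by (cases "blk k (sg i) = blk k (sg j)") auto
      also have "\<dots> = Cm $$ (i - d, j - d)" using False False2 ij' by (simp add: Cm_def)
      finally show ?thesis using e fb False False2 by simp
    qed
  qed
qed (simp_all add: nn)

lemma cp_Dm: "char_poly Dm = char_poly Rm * char_poly Cm"
  unfolding cp_conj[OF Dm_carrier] BD_block
  by (rule char_poly_four_block_ll0) (auto simp: Rm_def XD_def Cm_def)

lemma cp_Am: "char_poly Am = char_poly Qm * char_poly Cm"
  unfolding cp_conj[OF Am_carrier] BA_block
  by (rule char_poly_four_block_ll0) (auto simp: Qm_def XA_def Cm_def)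

end

definition djr0 :: "(nat \<Rightarrow> nat) \<Rightarrow> (nat \<Rightarrow> nat \<Rightarrow> nat \<Rightarrow> bool) \<Rightarrow> nat \<Rightarrow> nat \<Rightarrow> bool" where
  "djr0 k E p q = (blk k p = blk k q \<and> E (blk k p) (p - off k (blk k p)) (q - off k (blk k q)))"

lemma adj_block_split:
  "adj_mat (off k (Suc d)) (djr0 k E) =
   four_block_mat (adj_mat (off k d) (djr0 k E)) (0\<^sub>m (off k d) (k d)) (0\<^sub>m (k d) (off k d)) (adj_mat (k d) (E d))"
proof (rule eq_matI)
  fix p q assume pq: "p < dim_row (four_block_mat (adj_mat (off k d) (djr0 k E)) (0\<^sub>m (off k d) (k d)) (0\<^sub>m (k d) (off k d)) (adj_mat (k d) (E d)))"
    "q < dim_col (four_block_mat (adj_mat (off k d) (djr0 k E)) (0\<^sub>m (off k d) (k d)) (0\<^sub>m (k d) (off k d)) (adj_mat (k d) (E d)))"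
  then have pq': "p < off k d + k d" "q < off k d + k d" by (auto simp: adj_mat_def)
  have bp: "p < off k d \<Longrightarrow> blk k p < d" using blk_ex[of p k d] by auto
  have bq: "q < off k d \<Longrightarrow> blk k q < d" using blk_ex[of q k d] by auto
  have bp2: "\<not> p < off k d \<Longrightarrow> blk k p = d" using pq' by (intro blk_unique) (auto simp: off_Suc)
  have bq2: "\<not> q < off k d \<Longrightarrow> blk k q = d" using pq' by (intro blk_unique) (auto simp: off_Suc)
  show "adj_mat (off k (Suc d)) (djr0 k E) $$ (p, q) =
    four_block_mat (adj_mat (off k d) (djr0 k E)) (0\<^sub>m (off k d) (k d)) (0\<^sub>m (k d) (off k d)) (adj_mat (k d) (E d)) $$ (p, q)"
  proof -
    have L: "adj_mat (off k (Suc d)) (djr0 k E) $$ (p, q) = (if djr0 k E p q then 1 else 0)"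
      using pq' by (simp add: adj_mat_def off_Suc)
    have R: "four_block_mat (adj_mat (off k d) (djr0 k E)) (0\<^sub>m (off k d) (k d)) (0\<^sub>m (k d) (off k d)) (adj_mat (k d) (E d)) $$ (p, q)
      = (if p < off k d then if q < off k d then (if djr0 k E p q then 1 else 0) else 0
         else if q < off k d then 0 else (if E d (p - off k d) (q - off k d) then 1 else 0))"
      using pq' by (simp add: adj_mat_def)
    show ?thesis unfolding L R
    proof (cases "p < off k d"; cases "q < off k d")
      assume "p < off k d" "\<not> q < off k d"
      then show "(if djr0 k E p q then 1 else 0) = (if p < off k d then if q < off k d then (if djr0 k E p q then 1 else 0) else 0
         else if q < off k d then 0 else (if E d (p - off k d) (q - off k d) then 1 else 0))"
        using bp bq2 by (simp add: djr0_def)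
    next
      assume "\<not> p < off k d" "q < off k d"
      then show "(if djr0 k E p q then 1 else 0) = (if p < off k d then if q < off k d then (if djr0 k E p q then 1 else 0) else 0
         else if q < off k d then 0 else (if E d (p - off k d) (q - off k d) then 1 else 0))"
        using bq bp2 by (simp add: djr0_def)
    next
      assume "\<not> p < off k d" "\<not> q < off k d"
      then show "(if djr0 k E p q then 1 else 0) = (if p < off k d then if q < off k d then (if djr0 k E p q then 1 else 0) else 0
         else if q < off k d then 0 else (if E d (p - off k d) (q - off k d) then 1 else 0))"
        using bq2 bp2 by (simp add: djr0_def)
    qed simp
  qed
qed (auto simp: adj_mat_def off_Suc)

lemma cp_blockdiag:
  "char_poly (adj_mat (off k d) (djr0 k E)) = (\<Prod>i<d. char_poly (adj_mat (k i) (E i)))"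
proof (induction d)
  case 0
  show ?case using char_poly_upper_triangular[of "adj_mat 0 (djr0 k E)" 0]
    by (simp add: adj_mat_def upper_triangular_def diag_mat_def)
next
  case (Suc d)
  have "char_poly (adj_mat (off k (Suc d)) (djr0 k E)) = char_poly (adj_mat (off k d) (djr0 k E)) * char_poly (adj_mat (k d) (E d))"
    unfolding adj_block_split by (rule char_poly_four_block_ll0) (auto simp: adj_mat_def)
  then show ?case using Suc.IH by simp
qed

lemma pen_triangular_diag:
  fixes f :: "nat \<Rightarrow> complex"
  assumes "A \<in> carrier_mat m m" "upper_triangular A" "\<And>i. i < m \<Longrightarrow> A $$ (i,i) = f i"
  shows "pen (char_poly A) = (\<Sum>i<m. cmod (f i))"
proof -
  have "char_poly A = (\<Prod>a\<leftarrow>diag_mat A. [:- a, 1:])" by (rule char_poly_upper_triangular[OF assms(1,2)])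
  also have "diag_mat A = map f [0..<m]" using assms by (auto simp: diag_mat_def)
  finally have "char_poly A = prod_list (map (\<lambda>i. [:- f i, 1:]) [0..<m])" by (simp add: comp_def)
  also have "\<dots> = (\<Prod>i\<in>{0..<m}. [:- f i, 1:])" by (metis distinct_upt prod.distinct_set_conv_list set_upt)
  finally have "char_poly A = (\<Prod>i<m. [:- f i, 1:])" by (simp add: lessThan_atLeast0)
  then show ?thesis by (simp add: pen_prod pen_linear)
qed

context js begin

lemma djr_eq: "djr = djr0 k E"
  by (intro ext) (simp add: djr_def djr0_def)

lemma pen_Rm: "pen (char_poly Rm) = (\<Sum>i<d. real (r i))"
  by (subst pen_triangular_diag[of Rm d "\<lambda>i. of_nat (r i)"]) (auto simp: Rm_def upper_triangular_def)

lemma energy_identity: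
  "graph_energy n (join_rel d k E) + (\<Sum>i<d. real (r i)) = pen (char_poly Qm) + (\<Sum>i<d. graph_energy (k i) (E i))"
proof -
  have nzC: "char_poly Cm \<noteq> 0" by (rule char_poly_nz[of _ "n-d"]) (simp add: Cm_def)
  have nzQ: "char_poly Qm \<noteq> 0" by (rule char_poly_nz[of _ d]) (simp add: Qm_def)
  have nzR: "char_poly Rm \<noteq> 0" by (rule char_poly_nz[of _ d]) (simp add: Rm_def)
  have A: "graph_energy n (join_rel d k E) = pen (char_poly Qm) + pen (char_poly Cm)"
    unfolding graph_energy_def mat_energy_pen Am_def[symmetric] cp_Am by (rule pen_mult[OF nzQ nzC])
  have nz: "\<forall>i<d. char_poly (adj_mat (k i) (E i)) \<noteq> 0"
  proof (intro allI impI)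
    fix i show "char_poly (adj_mat (k i) (E i)) \<noteq> 0" by (rule char_poly_nz[of _ "k i"]) (simp add: adj_mat_def)
  qed
  have "pen (char_poly Dm) = (\<Sum>i<d. graph_energy (k i) (E i))"
    unfolding Dm_def djr_eq n_def cp_blockdiag graph_energy_def mat_energy_pen
    by (rule pen_prod[OF nz])
  moreover have "pen (char_poly Dm) = (\<Sum>i<d. real (r i)) + pen (char_poly Cm)"
    unfolding cp_Dm pen_mult[OF nzR nzC] pen_Rm ..
  ultimately show ?thesis using A by simp
qed

end

lemma complete_energy:
  assumes m: "m \<ge> 1"
  shows "graph_energy m complete_rel = 2 * (real m - 1)"
proof -
  interpret J: js 1 "\<lambda>_. m" "\<lambda>_. m - 1" "\<lambda>_. complete_rel"
  proof
    show "\<forall>i<1. 0 < m" using m by simp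
    show "\<forall>i<1. regular_graph m complete_rel (m - 1)"
      unfolding regular_graph_def complete_rel_def
    proof (intro allI impI)
      fix i u :: nat assume "u < m"
      have "{v. v < m \<and> u \<noteq> v} = {0..<m} - {u}" by auto
      then show "card {v. v < m \<and> u \<noteq> v} = m - 1" using \<open>u < m\<close> by simp
    qed
  qed
  have n: "J.n = m" unfolding J.n_def off_def by simp
  have bl0: "blk (\<lambda>_. m) p = 0" if "p < m" for p
    using blk_unique[of "\<lambda>_. m" 0 p] that by (simp add: off_def)
  have D: "J.Dm = adj_mat m complete_rel"
    unfolding J.Dm_def n
  proof (rule eq_matI)
    fix p q assume pq: "p < dim_row (adj_mat m complete_rel)" "q < dim_col (adj_mat m complete_rel)"
    then have pq': "p < m" "q < m" by (auto simp: adj_mat_def)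
    have "J.djr p q = complete_rel p q"
      unfolding J.djr_def bl0[OF pq'(1)] bl0[OF pq'(2)] by (simp add: off_def)
    then show "adj_mat m J.djr $$ (p, q) = adj_mat m complete_rel $$ (p, q)"
      using pq' by (simp add: adj_mat_def)
  qed (simp_all add: adj_mat_def)
  have Cent: "J.Cm $$ (i,j) = (if i = j then -1 else 0)" if ij: "i < m - 1" "j < m - 1" for i j
  proof -
    have s: "1 \<le> i + 1" "i + 1 < J.n" "1 \<le> j + 1" "j + 1 < J.n" using ij n by auto
    have sl: "J.sg (i+1) < m" "J.sg (j+1) < m" using J.sg_lt[OF s(1,2)] J.sg_lt[OF s(3,4)] n by auto
    have sn: "J.sg (j+1) \<noteq> 0" using J.sg_not_start[OF s(3,4), of 0] by (simp add: off_def)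
    have ne: "(J.sg (i+1) = J.sg (j+1)) = (i = j)" using J.sg_inj[OF s] by auto
    have e: "J.Cm $$ (i,j) = J.Dm $$ (J.sg (i+1), J.sg (j+1)) - J.Dm $$ (off (\<lambda>_. m) (blk (\<lambda>_. m) (J.sg (i+1))), J.sg (j+1))"
      unfolding J.Cm_def using ij n by simp
    have o: "off (\<lambda>_. m) (blk (\<lambda>_. m) (J.sg (i+1))) = 0" unfolding bl0[OF sl(1)] by (simp add: off_def)
    show ?thesis unfolding e o D using sl sn ne by (simp add: adj_mat_def complete_rel_def)
  qed
  have Cc: "J.Cm \<in> carrier_mat (m-1) (m-1)" unfolding J.Cm_def using n by simp
  have Cut: "upper_triangular J.Cm"
    unfolding upper_triangular_def using Cc Cent by auto
  have pC: "pen (char_poly J.Cm) = real (m - 1)"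
    using pen_triangular_diag[OF Cc Cut, of "\<lambda>_. -1"] Cent by simp
  have nzC: "char_poly J.Cm \<noteq> 0" by (rule char_poly_nz[OF Cc])
  have nzR: "char_poly J.Rm \<noteq> 0" by (rule char_poly_nz[of _ 1]) (unfold J.Rm_def, simp)
  have "graph_energy m complete_rel = pen (char_poly J.Dm)"
    unfolding graph_energy_def mat_energy_pen D ..
  also have "\<dots> = real (m - 1) + real (m - 1)"
    unfolding J.cp_Dm pen_mult[OF nzR nzC] J.pen_Rm pC by simp
  finally show ?thesis using m by simp
qed

lemma IVT_sign:
  fixes g :: "real \<Rightarrow> real"
  assumes "a < b" "continuous_on {a..b} g" "g a * g b < 0"
  shows "\<exists>x. a < x \<and> x < b \<and> g x = 0"
proof -
  have "g a < 0 \<and> 0 < g b \<or> g a > 0 \<and> g b < 0" using assms(3)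
    by (metis mult_less_0_iff)
  then obtain x where x: "a \<le> x" "x \<le> b" "g x = 0"
  proof
    assume "g a < 0 \<and> 0 < g b"
    then show ?thesis using IVT'[of g a 0 b] assms that by auto
  next
    assume "g a > 0 \<and> g b < 0"
    then show ?thesis using IVT2'[of g b 0 a] assms that by auto
  qed
  moreover have "x \<noteq> a" "x \<noteq> b" using x assms(3) by auto
  ultimately show ?thesis by (intro exI[of _ x]) auto
qed

context js begin

definition sv :: "nat \<Rightarrow> real" where "sv i = real (k i) - real (r i)"

definition gf :: "real \<Rightarrow> real" where
  "gf x = (\<Sum>j<d. real (k j) * (\<Prod>l\<in>{..<d}-{j}. x + sv l)) - (\<Prod>l<d. x + sv l)"

lemma gf_cont: "continuous_on S gf"
  unfolding gf_def by (intro continuous_intros)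

lemma gf_at: assumes i: "i < d" shows "gf (- sv i) = real (k i) * (\<Prod>l\<in>{..<d}-{i}. sv l - sv i)"
proof -
  have z: "(\<Prod>l<d. - sv i + sv l) = 0" using i by (intro prod_zero) auto
  have "(\<Sum>j<d. real (k j) * (\<Prod>l\<in>{..<d}-{j}. - sv i + sv l))
      = (\<Sum>j<d. if j = i then real (k i) * (\<Prod>l\<in>{..<d}-{i}. - sv i + sv l) else 0)"
  proof (rule sum.cong)
    fix j assume j: "j \<in> {..<d}"
    show "real (k j) * (\<Prod>l\<in>{..<d}-{j}. - sv i + sv l) = (if j = i then real (k i) * (\<Prod>l\<in>{..<d}-{i}. - sv i + sv l) else 0)"
    proof (cases "j = i")
      case False
      then have "(\<Prod>l\<in>{..<d}-{j}. - sv i + sv l) = 0" using i by (intro prod_zero) auto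
      then show ?thesis using False by simp
    qed simp
  qed simp
  also have "\<dots> = real (k i) * (\<Prod>l\<in>{..<d}-{i}. - sv i + sv l)" using i by (simp add: sum.delta')
  finally show ?thesis unfolding gf_def z by simp
qed

lemma gf_eq:
  assumes nz: "\<forall>j<d. x + sv j \<noteq> 0"
  shows "gf x = (\<Prod>l<d. x + sv l) * ((\<Sum>j<d. real (k j) / (x + sv j)) - 1)"
proof -
  have "(\<Prod>l\<in>{..<d}-{j}. x + sv l) = (\<Prod>l<d. x + sv l) / (x + sv j)" if j: "j < d" for j
  proof -
    have "(\<Prod>l<d. x + sv l) = (x + sv j) * (\<Prod>l\<in>{..<d}-{j}. x + sv l)"
      using j by (subst prod.remove[of _ j]) auto
    then show ?thesis using nz j by simp
  qed
  then have "(\<Sum>j<d. real (k j) * (\<Prod>l\<in>{..<d}-{j}. x + sv l)) = (\<Sum>j<d. (\<Prod>l<d. x + sv l) * (real (k j) / (x + sv j)))"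
    by (intro sum.cong) auto
  also have "\<dots> = (\<Prod>l<d. x + sv l) * (\<Sum>j<d. real (k j) / (x + sv j))"
    by (simp add: sum_distrib_left)
  finally show ?thesis unfolding gf_def by (simp add: algebra_simps)
qed

lemma Qm_carrier: "Qm \<in> carrier_mat d d" by (simp add: Qm_def)

lemma eig_root:
  assumes d: "d \<ge> 1" and nz: "\<forall>j<d. x + sv j \<noteq> 0" and F: "(\<Sum>j<d. real (k j) / (x + sv j)) = 1"
  shows "poly (char_poly Qm) (complex_of_real x) = 0"
proof -
  define v where "v = vec d (\<lambda>j. complex_of_real (1 / (x + sv j)))"
  have vc: "v \<in> carrier_vec d" by (simp add: v_def)
  have v0: "v \<noteq> 0\<^sub>v d"
  proof
    assume "v = 0\<^sub>v d"
    then have "v $ 0 = 0" using d by simp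
    moreover have "x + sv 0 \<noteq> 0" using nz d by auto
    then have "complex_of_real (x + sv 0) \<noteq> 0" using of_real_eq_0_iff by blast
    ultimately show False using d by (simp add: v_def)
  qed
  have row: "(\<Sum>j<d. (if i = j then real (r j) else real (k j)) * (1 / (x + sv j))) = x * (1 / (x + sv i))"
    if i: "i < d" for i
  proof -
    have "(\<Sum>j<d. (if i = j then real (r j) else real (k j)) * (1 / (x + sv j)))
        = (\<Sum>j<d. real (k j) / (x + sv j) - (if j = i then sv i / (x + sv i) else 0))"
      by (intro sum.cong) (auto simp: sv_def diff_divide_distrib)
    also have "\<dots> = 1 - sv i / (x + sv i)" using i F by (simp add: sum_subtractf sum.delta')
    also have "\<dots> = x * (1 / (x + sv i))" using nz i by (simp add: field_simps)
    finally show ?thesis .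
  qed
  have "Qm *\<^sub>v v = complex_of_real x \<cdot>\<^sub>v v"
  proof (rule eq_vecI)
    fix i assume "i < dim_vec (complex_of_real x \<cdot>\<^sub>v v)"
    then have i: "i < d" by (simp add: v_def)
    have "(Qm *\<^sub>v v) $ i = (\<Sum>j\<in>{0..<d}. Qm $$ (i,j) * v $ j)"
      using i by (simp add: Qm_def v_def scalar_prod_def)
    also have "\<dots> = (\<Sum>j<d. complex_of_real ((if i = j then real (r j) else real (k j)) * (1 / (x + sv j))))"
      by (intro sum.cong) (use i in \<open>auto simp: Qm_def v_def\<close>)
    also have "\<dots> = complex_of_real (\<Sum>j<d. (if i = j then real (r j) else real (k j)) * (1 / (x + sv j)))"
      by simp
    also have "\<dots> = complex_of_real (x * (1 / (x + sv i)))" using row[OF i] by simp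
    also have "\<dots> = (complex_of_real x \<cdot>\<^sub>v v) $ i" using i by (simp add: v_def)
    finally show "(Qm *\<^sub>v v) $ i = (complex_of_real x \<cdot>\<^sub>v v) $ i" .
  qed (simp add: v_def Qm_def)
  then have "eigenvector Qm v (complex_of_real x)"
    unfolding eigenvector_def using vc v0 by (simp add: Qm_def)
  then have "eigenvalue Qm (complex_of_real x)" unfolding eigenvalue_def by blast
  then show ?thesis using eigenvalue_root_char_poly[OF Qm_carrier] by simp
qed

end

context js begin

lemma pen_Qm_bound:
  assumes rk: "\<forall>i<d. r i < k i"
    and inc: "\<forall>i. i + 1 < d \<longrightarrow> sv i < sv (i+1)"
  shows "pen (char_poly Qm) \<ge> (\<Sum>i<d. real (r i)) + 2 * (\<Sum>i<d-1. sv i) \<and>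
    (d \<ge> 2 \<longrightarrow> pen (char_poly Qm) > (\<Sum>i<d. real (r i)) + 2 * (\<Sum>i<d-1. sv i))"
proof (cases "d = 0")
  case True
  then show ?thesis using pen_nonneg by simp
next
  case False
  then have d1: "d \<ge> 1" by simp
  have sv1: "sv i \<ge> 1" if "i < d" for i
  proof -
    have "r i + 1 \<le> k i" using rk that by auto
    then have "real (r i) + 1 \<le> real (k i)" by (metis of_nat_1 of_nat_add of_nat_le_iff)
    then show ?thesis unfolding sv_def by simp
  qed
  have svm: "sv i < sv j" if "i < j" "j < d" for i j
    using that
  proof (induction j)
    case 0 then show ?case by simp
  next
    case (Suc j)
    show ?case
    proof (cases "i = j")
      case True then show ?thesis using inc Suc.prems by auto
    next
      case False
      then have "sv i < sv j" using Suc by auto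
      also have "sv j < sv (Suc j)" using inc Suc.prems by auto
      finally show ?thesis .
    qed
  qed
  have svle: "sv i \<le> sv j" if "i \<le> j" "j < d" for i j
    using svm[of i j] that by (cases "i = j") auto
  have ne0: "0 \<in> {..<d}" using d1 by simp
  have kp: "real (k i) > 0" if "i < d" for i using kpos that by auto
  have gs: "gf (- sv i) * gf (- sv (i+1)) < 0" if i: "i + 1 < d" for i
  proof -
    define T where "T = {..<d} - {i, Suc i}"
    have fT: "finite T" by (simp add: T_def)
    have p1: "(\<Prod>l\<in>{..<d}-{i}. sv l - sv i) = (sv (i+1) - sv i) * (\<Prod>l\<in>T. sv l - sv i)"
    proof -
      have "(\<Prod>l\<in>{..<d}-{i}. sv l - sv i) = (sv (i+1) - sv i) * (\<Prod>l\<in>{..<d}-{i}-{i+1}. sv l - sv i)"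
        using i by (subst prod.remove[of _ "i+1"]) auto
      moreover have "{..<d}-{i}-{i+1} = T" by (auto simp: T_def)
      ultimately show ?thesis by simp
    qed
    have p2: "(\<Prod>l\<in>{..<d}-{i+1}. sv l - sv (i+1)) = (sv i - sv (i+1)) * (\<Prod>l\<in>T. sv l - sv (i+1))"
    proof -
      have "(\<Prod>l\<in>{..<d}-{i+1}. sv l - sv (i+1)) = (sv i - sv (i+1)) * (\<Prod>l\<in>{..<d}-{i+1}-{i}. sv l - sv (i+1))"
        using i by (subst prod.remove[of _ i]) auto
      moreover have "{..<d}-{i+1}-{i} = T" by (auto simp: T_def)
      ultimately show ?thesis by simp
    qed
    have pos: "(\<Prod>l\<in>T. sv l - sv i) * (\<Prod>l\<in>T. sv l - sv (i+1)) > 0"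
    proof -
      have "(\<Prod>l\<in>T. sv l - sv i) * (\<Prod>l\<in>T. sv l - sv (i+1)) = (\<Prod>l\<in>T. (sv l - sv i) * (sv l - sv (i+1)))"
        by (simp add: prod.distrib)
      also have "\<dots> > 0"
      proof (rule prod_pos)
        fix l assume l: "l \<in> T"
        then have "l < i \<or> i + 1 < l" "l < d" by (auto simp: T_def)
        then show "(sv l - sv i) * (sv l - sv (i+1)) > 0"
        proof (elim disjE)
          assume "l < i"
          then have "sv l < sv i" "sv l < sv (i+1)" using svm i by auto
          then show ?thesis by (intro mult_neg_neg) auto
        next
          assume "i + 1 < l"
          then have "sv i < sv l" "sv (i+1) < sv l" using svm \<open>l < d\<close> by auto
          then show ?thesis by (intro mult_pos_pos) auto
        qed
      qed
      finally show ?thesis .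
    qed
    have a: "sv (i+1) - sv i > 0" using svm i by auto
    have "gf (- sv i) * gf (- sv (i+1)) = - ((real (k i) * real (k (i+1))) * (sv (i+1) - sv i)^2 *
        ((\<Prod>l\<in>T. sv l - sv i) * (\<Prod>l\<in>T. sv l - sv (i+1))))"
    proof -
      have e1: "gf (- sv i) = real (k i) * ((sv (i+1) - sv i) * (\<Prod>l\<in>T. sv l - sv i))"
        using gf_at[of i] p1 i by simp
      have e2: "gf (- sv (i+1)) = real (k (i+1)) * ((sv i - sv (i+1)) * (\<Prod>l\<in>T. sv l - sv (i+1)))"
        using gf_at[of "i+1"] p2 i by simp
      show ?thesis unfolding e1 e2 by (simp add: power2_eq_square algebra_simps)
    qed
    also have "\<dots> < 0"
      using kp[of i] kp[of "i+1"] i a pos by (simp add: mult_pos_pos)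
    finally show ?thesis .
  qed
  have "\<forall>i. \<exists>x. i + 1 < d \<longrightarrow> (- sv (i+1) < x \<and> x < - sv i \<and> gf x = 0)"
  proof
    fix i show "\<exists>x. i + 1 < d \<longrightarrow> (- sv (i+1) < x \<and> x < - sv i \<and> gf x = 0)"
    proof (cases "i + 1 < d")
      case True
      have "- sv (i+1) < - sv i" using svm True by auto
      moreover have "gf (- sv (i+1)) * gf (- sv i) < 0" using gs[OF True] by (simp add: mult.commute)
      ultimately obtain x where "- sv (i+1) < x" "x < - sv i" "gf x = 0"
        using IVT_sign[of "- sv (i+1)" "- sv i" gf] gf_cont by blast
      then show ?thesis by blast
    qed simp
  qed
  then obtain mu where mu: "\<And>i. i + 1 < d \<Longrightarrow> - sv (i+1) < mu i \<and> mu i < - sv i \<and> gf (mu i) = 0"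
    by metis
  have mu_nz: "\<forall>j<d. mu i + sv j \<noteq> 0" if i: "i + 1 < d" for i
  proof (intro allI impI)
    fix j assume j: "j < d"
    show "mu i + sv j \<noteq> 0"
    proof (cases "j \<le> i")
      case True
      then have "sv j \<le> sv i" using svle i by auto
      then show ?thesis using mu[OF i] by auto
    next
      case False
      then have "sv (i+1) \<le> sv j" using svle j by auto
      then show ?thesis using mu[OF i] by auto
    qed
  qed
  have root_of: "poly (char_poly Qm) (complex_of_real x) = 0" if nz: "\<forall>j<d. x + sv j \<noteq> 0" and g0: "gf x = 0" for x
  proof -
    have "(\<Prod>l<d. x + sv l) \<noteq> 0" using nz by simp
    then have "(\<Sum>j<d. real (k j) / (x + sv j)) = 1" using g0 gf_eq[OF nz] by simp
    then show ?thesis by (rule eig_root[OF d1 nz])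
  qed
  have mu_root: "poly (char_poly Qm) (complex_of_real (mu i)) = 0" if i: "i + 1 < d" for i
    using root_of mu_nz[OF i] mu[OF i] by blast
  define K where "K = (\<Sum>j<d. real (k j))"
  define lam0 where "lam0 = (\<Sum>i<d. real (r i)) + (\<Sum>i<d-1. sv i)"
  have dd: "d = Suc (d - 1)" using d1 by simp
  have sumsv: "(\<Sum>i<d. sv i) = (\<Sum>i<d-1. sv i) + sv (d-1)"
    by (subst dd) (simp add: sum.lessThan_Suc)
  have sumr: "(\<Sum>i<d. real (r i)) = K - (\<Sum>i<d. sv i)"
    unfolding K_def sv_def by (simp add: sum_subtractf)
  have lam0K: "lam0 = K - sv (d-1)" unfolding lam0_def sumr sumsv by simp
  have lam0_nn: "lam0 \<ge> 0" unfolding lam0_def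
  proof (intro add_nonneg_nonneg sum_nonneg)
    fix i assume "i \<in> {..<d-1}"
    then have "i < d" by auto
    then show "0 \<le> sv i" using sv1[of i] by linarith
  qed auto
  have Kpos: "K > 0"
  proof -
    have "real (k 0) \<le> K" unfolding K_def by (rule member_le_sum) (use d1 in auto)
    then show ?thesis using kp[of 0] d1 by simp
  qed
  have pos_ge: "x + sv j > 0" if "x \<ge> lam0" "j < d" for x j using sv1[OF that(2)] that lam0_nn by simp
  have nz_ge: "\<forall>j<d. x + sv j \<noteq> 0" if "x \<ge> lam0" for x using pos_ge[OF that] by (metis less_irrefl)
  have prod_pos_ge: "(\<Prod>l<d. x + sv l) > 0" if "x \<ge> lam0" for x using pos_ge[OF that] by (intro prod_pos) auto
  have sumK: "(\<Sum>j<d. real (k j) / K) = 1" unfolding sum_divide_distrib[symmetric] K_def[symmetric] using Kpos by simp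
  have F0: "(\<Sum>j<d. real (k j) / (lam0 + sv j)) \<ge> 1"
  proof -
    have "(\<Sum>j<d. real (k j) / K) \<le> (\<Sum>j<d. real (k j) / (lam0 + sv j))"
    proof (rule sum_mono)
      fix j assume j: "j \<in> {..<d}"
      have "lam0 + sv j \<le> K" using svle[of j "d-1"] j lam0K d1 by auto
      moreover have "lam0 + sv j > 0" using pos_ge j by auto
      ultimately show "real (k j) / K \<le> real (k j) / (lam0 + sv j)"
        by (intro divide_left_mono) (auto intro: mult_pos_pos)
    qed
    then show ?thesis using sumK by simp
  qed
  have F1: "(\<Sum>j<d. real (k j) / (K + sv j)) < 1"
  proof -
    have "(\<Sum>j<d. real (k j) / (K + sv j)) < (\<Sum>j<d. real (k j) / K)"
    proof (rule sum_strict_mono)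
      fix j assume j: "j \<in> {..<d}"
      have "K < K + sv j" using sv1[of j] j by force
      then show "real (k j) / (K + sv j) < real (k j) / K"
        using Kpos kp j by (intro divide_strict_left_mono) auto
    qed (use ne0 in blast)+
    then show ?thesis using sumK by simp
  qed
  have lamK: "lam0 \<le> K" using lam0K sv1[of "d-1"] d1 by simp
  have g0: "gf lam0 \<ge> 0"
    unfolding gf_eq[OF nz_ge[OF order_refl]] using prod_pos_ge[OF order_refl] F0 by simp
  have g1: "gf K \<le> 0"
    unfolding gf_eq[OF nz_ge[OF lamK]] using prod_pos_ge[OF lamK] F1
    by (simp add: mult_pos_neg less_imp_le)
  obtain bb where bb: "lam0 \<le> bb" "bb \<le> K" "gf bb = 0"
    using IVT2'[of gf K 0 lam0] g0 g1 lamK gf_cont by blast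
  have bb_root: "poly (char_poly Qm) (complex_of_real bb) = 0"
    using root_of nz_ge[OF bb(1)] bb(3) by blast
  define Fs where "Fs = insert (complex_of_real bb) ((\<lambda>i. complex_of_real (mu i)) ` {..<d-1})"
  have mu_neg: "mu i < - sv i" "- sv i < 0" if "i < d - 1" for i
  proof -
    have h: "i + 1 < d" "i < d" using that by auto
    show "mu i < - sv i" "- sv i < 0" using mu[OF h(1)] sv1[OF h(2)] by auto
  qed
  have notin: "complex_of_real bb \<notin> (\<lambda>i. complex_of_real (mu i)) ` {..<d-1}"
  proof
    assume "complex_of_real bb \<in> (\<lambda>i. complex_of_real (mu i)) ` {..<d-1}"
    then obtain i where "i < d - 1" "bb = mu i" by auto
    then show False using mu_neg[of i] bb(1) lam0_nn by auto
  qed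
  have inj: "inj_on (\<lambda>i. complex_of_real (mu i)) {..<d-1}"
  proof (rule inj_onI)
    fix i j assume ij: "i \<in> {..<d-1}" "j \<in> {..<d-1}" "complex_of_real (mu i) = complex_of_real (mu j)"
    then have e: "mu i = mu j" by simp
    have h: "i + 1 < d" "j + 1 < d" "i < d" "j < d" using ij by auto
    note mi = mu[OF h(1)] and mj = mu[OF h(2)]
    show "i = j"
    proof (rule ccontr)
      assume "i \<noteq> j"
      then have "i < j \<or> j < i" by auto
      then show False
      proof
        assume "i < j"
        then have "mu j < mu i" using mi mj svle[of "i+1" j] h by auto
        then show False using e by simp
      next
        assume "j < i"
        then have "mu i < mu j" using mi mj svle[of "j+1" i] h by auto
        then show False using e by simp
      qed
    qed
  qed
  have "pen (char_poly Qm) \<ge> (\<Sum>a\<in>Fs. cmod a)"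
    by (rule pen_ge[OF char_poly_nz[OF Qm_carrier]]) (use bb_root mu_root in \<open>auto simp: Fs_def\<close>)
  moreover have "(\<Sum>a\<in>Fs. cmod a) = bb + (\<Sum>i<d-1. - mu i)"
  proof -
    have "(\<Sum>a\<in>Fs. cmod a) = cmod (complex_of_real bb) + (\<Sum>a\<in>(\<lambda>i. complex_of_real (mu i)) ` {..<d-1}. cmod a)"
      unfolding Fs_def using notin by (simp add: sum.insert)
    also have "(\<Sum>a\<in>(\<lambda>i. complex_of_real (mu i)) ` {..<d-1}. cmod a) = (\<Sum>i<d-1. cmod (complex_of_real (mu i)))"
      by (rule sum.reindex[OF inj, unfolded comp_def])
    also have "\<dots> = (\<Sum>i<d-1. - mu i)"
    proof (intro sum.cong refl)
      fix i assume "i \<in> {..<d-1}"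
      then have "i < d - 1" by simp
      from mu_neg[OF this] show "cmod (complex_of_real (mu i)) = - mu i" by simp
    qed
    also have "cmod (complex_of_real bb) = bb" using bb(1) lam0_nn by simp
    finally show ?thesis .
  qed
  moreover have lt: "sv i < - mu i" if "i \<in> {..<d-1}" for i
  proof -
    have "i < d - 1" using that by simp
    from mu_neg[OF this] show ?thesis by simp
  qed
  moreover have "(\<Sum>i<d-1. sv i) \<le> (\<Sum>i<d-1. - mu i)"
    by (rule sum_mono) (use lt in force)
  moreover have "d \<ge> 2 \<Longrightarrow> (\<Sum>i<d-1. sv i) < (\<Sum>i<d-1. - mu i)"
  proof (rule sum_strict_mono)
    assume "d \<ge> 2" then show "{..<d-1} \<noteq> {}" by (metis Suc_1 Suc_le_eq diff_Suc_1 emptyE lessThan_iff zero_less_diff Suc_le_lessD)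
  qed (use lt in auto)
  ultimately show ?thesis using bb(1) unfolding lam0_def by auto
qed

end

theorem mainTheorem13:
  fixes d :: nat and k r :: "nat \<Rightarrow> nat" and E :: "nat \<Rightarrow> nat \<Rightarrow> nat \<Rightarrow> bool"
  assumes nonempty: "\<forall>i<d. k i > 0"
    and simple: "\<forall>i<d. simple_graph (k i) (E i)"
    and regular: "\<forall>i<d. regular_graph (k i) (E i) (r i)"
    and incr: "\<forall>i. i + 1 < d \<longrightarrow> int (k i) - int (r i) < int (k (i+1)) - int (r (i+1))"
  shows "graph_energy (off k d) (join_rel d k E)
           \<ge> 2 * (\<Sum>i<d-1. real (k i) - real (r i)) + (\<Sum>i<d. graph_energy (k i) (E i))
         \<and> (d \<ge> 2 \<longrightarrow> graph_energy (off k d) (join_rel d k E)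
           > graph_energy d complete_rel + (\<Sum>i<d. graph_energy (k i) (E i)))"
proof -
  interpret J: js d k r E using nonempty regular by unfold_locales auto
  have rk: "\<forall>i<d. r i < k i"
  proof (intro allI impI)
    fix i assume i: "i < d"
    have k0: "0 < k i" using nonempty i by auto
    have "card {v. v < k i \<and> E i 0 v} = r i" using regular i k0 unfolding regular_graph_def by auto
    moreover have "{v. v < k i \<and> E i 0 v} \<subseteq> {0..<k i} - {0}"
      using simple i k0 unfolding simple_graph_def by auto
    then have "card {v. v < k i \<and> E i 0 v} \<le> card ({0..<k i} - {0})" by (intro card_mono) auto
    ultimately show "r i < k i" using k0 by simp
  qed
  have inc: "\<forall>i. i + 1 < d \<longrightarrow> J.sv i < J.sv (i+1)"
  proof (intro allI impI)
    fix i assume i: "i + 1 < d"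
    have "real_of_int (int (k i) - int (r i)) < real_of_int (int (k (i+1)) - int (r (i+1)))"
      using incr i by (simp only: of_int_less_iff)
    then show "J.sv i < J.sv (i+1)" unfolding J.sv_def by simp
  qed
  note B = J.pen_Qm_bound[OF rk inc]
  have I: "graph_energy (off k d) (join_rel d k E) + (\<Sum>i<d. real (r i)) = pen (char_poly J.Qm) + (\<Sum>i<d. graph_energy (k i) (E i))"
    using J.energy_identity unfolding J.n_def .
  have S: "(\<Sum>i<d-1. real (k i) - real (r i)) = (\<Sum>i<d-1. J.sv i)" unfolding J.sv_def ..
  have P1: "graph_energy (off k d) (join_rel d k E) \<ge> 2 * (\<Sum>i<d-1. real (k i) - real (r i)) + (\<Sum>i<d. graph_energy (k i) (E i))"
    using B I unfolding S by linarith
  have P2: "graph_energy (off k d) (join_rel d k E) > graph_energy d complete_rel + (\<Sum>i<d. graph_energy (k i) (E i))"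
    if d2: "d \<ge> 2"
  proof -
    have strict: "graph_energy (off k d) (join_rel d k E) > 2 * (\<Sum>i<d-1. J.sv i) + (\<Sum>i<d. graph_energy (k i) (E i))"
      using B I d2 by linarith
    have "(\<Sum>i<d-1. (1::real)) \<le> (\<Sum>i<d-1. J.sv i)"
    proof (rule sum_mono)
      fix i assume "i \<in> {..<d-1}"
      then have "i < d" by auto
      then have "r i + 1 \<le> k i" using rk by auto
      then have "real (r i) + 1 \<le> real (k i)" by (metis of_nat_1 of_nat_add of_nat_le_iff)
      then show "1 \<le> J.sv i" unfolding J.sv_def by simp
    qed
    then have "real d - 1 \<le> (\<Sum>i<d-1. J.sv i)" using d2 by (simp add: of_nat_diff)
    moreover have "graph_energy d complete_rel = 2 * (real d - 1)" using complete_energy[of d] d2 by simp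
    ultimately have G: "graph_energy d complete_rel \<le> 2 * (\<Sum>i<d-1. J.sv i)" by simp
    show ?thesis using add_right_mono[OF G, of "\<Sum>i<d. graph_energy (k i) (E i)"] strict by simp
  qed
  show ?thesis using P1 P2 by blast
qed


end
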